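(* Let $AB\Gamma$ be a (nondegenerate) triangle with interior angles $A$, $B$, $\Gamma$ at the vertices $A$, $B$, $\Gamma$ respectively. Let $\ell_1$ be the line perpendicular to $AB$ through $B$, $\ell_2$ the line perpendicular to $B\Gamma$ through $\Gamma$, and $\ell_3$ the line perpendicular to $\Gamma A$ through $A$. These three lines bound a triangle $A'B'\Gamma'$. If $E$ and $E'$ denote the areas of triangles $AB\Gamma$ and $A'B'\Gamma'$ respectively, then $$\frac{E'}{E} = (\cot A + \cot B + \cot \Gamma)^2 .$$ *)

theory Defs
  imports "HOL-Analysis.Analysis"
begin

definition vangle :: "'a::real_inner \<Rightarrow> 'a \<Rightarrow> real" where
  "vangle u v = arccos ((u \<bullet> v) / (norm u * norm v))"

definition angle :: "'a::real_inner \<Rightarrow> 'a \<Rightarrow> 'a \<Rightarrow> real" where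
  "angle a b c = vangle (a - b) (c - b)"

definition perp_line :: "real^2 \<Rightarrow> real^2 \<Rightarrow> real^2 \<Rightarrow> (real^2) set" where
  "perp_line p q r = {x. (x - p) \<bullet> (r - q) = 0}"

definition tri_area :: "real^2 \<Rightarrow> real^2 \<Rightarrow> real^2 \<Rightarrow> real" where
  "tri_area a b c = measure lebesgue (convex hull {a, b, c})"

end

theory Submission
  imports Defs
begin

lemma inner2: "(x::real^2) \<bullet> y = x$1*y$1 + x$2*y$2"
  by (simp add: inner_vec_def sum_2)

lemma cot_arccos_scalar:
  fixes p U V D :: real
  assumes U: "U > 0" and V: "V > 0" and L: "U*V - p^2 = D^2" and D: "D \<noteq> 0"
  shows "cot (arccos (p / (sqrt U * sqrt V))) = p / \<bar>D\<bar>"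
proof -
  define t where "t = p / (sqrt U * sqrt V)"
  have suv: "sqrt U * sqrt V = sqrt (U*V)" by (simp add: real_sqrt_mult)
  have uvpos: "U*V > 0" using U V by simp
  have t2: "t^2 = p^2/(U*V)" unfolding t_def suv using uvpos
    by (simp add: power_divide)
  have "1 - t^2 = (U*V - p^2)/(U*V)" using t2 U V by (simp add: diff_divide_distrib)
  hence "1 - t^2 = D^2/(U*V)" using L by simp
  hence s: "sqrt (1 - t^2) = \<bar>D\<bar> / sqrt (U*V)"
    by (simp add: real_sqrt_divide)
  have "p^2 < U*V" using L D by (smt (verit) zero_less_power2)
  hence tl: "t^2 < 1" using t2 uvpos by simp
  hence "\<bar>t\<bar> < 1" by (simp add: abs_square_less_1)
  hence tb: "-1 \<le> t" "t \<le> 1" by auto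
  have "cot (arccos t) = t / sqrt (1 - t^2)"
    using tb by (simp add: cot_def cos_arccos sin_arccos)
  also have "\<dots> = t * sqrt (U*V) / \<bar>D\<bar>" unfolding s by simp
  also have "t * sqrt (U*V) = p" unfolding t_def suv using U V by simp
  finally have "cot (arccos t) = p / \<bar>D\<bar>" .
  thus ?thesis unfolding t_def .
qed

lemma key_alg:
  fixes a1 a2 b1 b2 c1 c2 p1 p2 q1 q2 r1 r2 :: real
  assumes D: "(b1-a1)*(c2-a2)-(b2-a2)*(c1-a1) \<noteq> 0"
  and r1: "(r1-b1)*(b1-a1)+(r2-b2)*(b2-a2)=0" and r2: "(r1-c1)*(c1-b1)+(r2-c2)*(c2-b2)=0"
  and p1: "(p1-c1)*(c1-b1)+(p2-c2)*(c2-b2)=0" and p2: "(p1-a1)*(a1-c1)+(p2-a2)*(a2-c2)=0"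
  and q1: "(q1-a1)*(a1-c1)+(q2-a2)*(a2-c2)=0" and q2: "(q1-b1)*(b1-a1)+(q2-b2)*(b2-a2)=0"
  shows "4*((q1-p1)*(r2-p2)-(q2-p2)*(r1-p1))*((b1-a1)*(c2-a2)-(b2-a2)*(c1-a1))
     = ((a1-b1)^2+(a2-b2)^2+(b1-c1)^2+(b2-c2)^2+(c1-a1)^2+(c2-a2)^2)^2"
  using assms by algebra

lemma cot_vangle2:
  fixes u v :: "real^2"
  assumes D: "u$1* v$2 - u$2* v$1 \<noteq> 0"
  shows "cot (vangle u v) = (u \<bullet> v) / \<bar>u$1* v$2 - u$2* v$1\<bar>"
proof -
  have u0: "u \<bullet> u > 0"
  proof -
    have "u \<noteq> 0" using D by auto
    thus ?thesis by simp
  qed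
  have v0: "v \<bullet> v > 0"
  proof -
    have "v \<noteq> 0" using D by auto
    thus ?thesis by simp
  qed
  have L: "(u \<bullet> u)*(v \<bullet> v) - (u \<bullet> v)^2 = (u$1* v$2 - u$2* v$1)^2"
    unfolding inner2 by algebra
  have "cot (arccos ((u \<bullet> v) / (sqrt (u \<bullet> u) * sqrt (v \<bullet> v)))) = (u \<bullet> v) / \<bar>u$1* v$2 - u$2* v$1\<bar>"
    by (rule cot_arccos_scalar[OF u0 v0 L D])
  thus ?thesis unfolding vangle_def by (simp add: norm_eq_sqrt_inner)
qed

lemma noncollinear_det:
  fixes A B C :: "real^2"
  assumes "\<not> collinear {A, B, C}"
  shows "(B$1-A$1)*(C$2-A$2)-(B$2-A$2)*(C$1-A$1) \<noteq> 0"
proof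
  assume D0: "(B$1-A$1)*(C$2-A$2)-(B$2-A$2)*(C$1-A$1) = 0"
  define x where "x = B - A"
  define y where "y = C - A"
  have d: "x$1*y$2 - x$2*y$1 = 0" using D0 by (simp add: x_def y_def)
  have "collinear {0, x, y}"
  proof (cases "x = 0")
    case True thus ?thesis by (simp add: collinear_lemma)
  next
    case False
    hence "x$1 \<noteq> 0 \<or> x$2 \<noteq> 0" by (metis exhaust_2 vec_eq_iff zero_index)
    thus ?thesis
    proof
      assume h: "x$1 \<noteq> 0"
      have "y = (y$1/x$1) *\<^sub>R x"
        using h d by (simp add: vec_eq_iff forall_2 field_simps)
      thus ?thesis by (metis collinear_lemma)
    next
      assume h: "x$2 \<noteq> 0"
      have "y = (y$2/x$2) *\<^sub>R x"
        using h d by (simp add: vec_eq_iff forall_2 field_simps)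
      thus ?thesis by (metis collinear_lemma)
    qed
  qed
  hence "collinear {B, A, C}" using collinear_3[of B A C] by (simp add: x_def y_def)
  hence "collinear {A, B, C}" by (simp add: insert_commute)
  thus False using assms by simp
qed

lemma tri_area_eq:
  "tri_area a b c = \<bar>(c$1 - a$1) * (b$2 - a$2) - (b$1 - a$1) * (c$2 - a$2)\<bar> / 2"
proof -
  have "convex hull {a,b,c} \<in> sets lborel"
    unfolding sets_lborel by (intro borel_closed compact_imp_closed finite_imp_compact_convex_hull) auto
  thus ?thesis unfolding tri_area_def using content_triangle[of a b c] by simp
qed

theorem mainTheorem1:
  fixes A B C A' B' C' :: "real^2"
  assumes nondeg: "\<not> collinear {A, B, C}"
    and C': "C' \<in> perp_line B A B \<inter> perp_line C B C"
    and A': "A' \<in> perp_line C B C \<inter> perp_line A C A"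
    and B': "B' \<in> perp_line A C A \<inter> perp_line B A B"
  shows "tri_area A' B' C' / tri_area A B C
         = (cot (angle B A C) + cot (angle A B C) + cot (angle A C B))^2"
proof -
  define D where "D = (B$1-A$1)*(C$2-A$2)-(B$2-A$2)*(C$1-A$1)"
  define S where "S = (A$1-B$1)^2+(A$2-B$2)^2+(B$1-C$1)^2+(B$2-C$2)^2+(C$1-A$1)^2+(C$2-A$2)^2"
  have D0: "D \<noteq> 0" unfolding D_def by (rule noncollinear_det[OF nondeg])
  have K: "4*((B'$1-A'$1)*(C'$2-A'$2)-(B'$2-A'$2)*(C'$1-A'$1))*D = S^2"
    unfolding D_def S_def
    by (rule key_alg) (use D0 C' A' B' in \<open>simp_all add: D_def perp_line_def inner2\<close>)
  have c1: "cot (angle B A C) = ((B-A) \<bullet> (C-A)) / \<bar>D\<bar>"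
  proof -
    have "cot (angle B A C) = ((B-A) \<bullet> (C-A)) / \<bar>(B-A)$1*(C-A)$2 - (B-A)$2*(C-A)$1\<bar>"
      unfolding angle_def by (rule cot_vangle2) (use D0 in \<open>simp add: D_def\<close>)
    thus ?thesis by (simp add: D_def)
  qed
  have c2: "cot (angle A B C) = ((A-B) \<bullet> (C-B)) / \<bar>D\<bar>"
  proof -
    have e: "(A-B)$1*(C-B)$2 - (A-B)$2*(C-B)$1 = -D" by (simp add: D_def algebra_simps)
    have "cot (angle A B C) = ((A-B) \<bullet> (C-B)) / \<bar>(A-B)$1*(C-B)$2 - (A-B)$2*(C-B)$1\<bar>"
      unfolding angle_def by (rule cot_vangle2) (use D0 e in simp)
    thus ?thesis using e by simp
  qed
  have c3: "cot (angle A C B) = ((A-C) \<bullet> (B-C)) / \<bar>D\<bar>"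
  proof -
    have e: "(A-C)$1*(B-C)$2 - (A-C)$2*(B-C)$1 = D" by (simp add: D_def algebra_simps)
    have "cot (angle A C B) = ((A-C) \<bullet> (B-C)) / \<bar>(A-C)$1*(B-C)$2 - (A-C)$2*(B-C)$1\<bar>"
      unfolding angle_def by (rule cot_vangle2) (use D0 e in simp)
    thus ?thesis using e by simp
  qed
  have sum: "(B-A) \<bullet> (C-A) + (A-B) \<bullet> (C-B) + (A-C) \<bullet> (B-C) = S/2"
    unfolding inner2 S_def by (simp add: power2_eq_square algebra_simps)
  have rhs: "(cot (angle B A C) + cot (angle A B C) + cot (angle A C B))^2 = S^2/(4*D^2)"
    unfolding c1 c2 c3 add_divide_distrib[symmetric] sum
    by (simp add: power_divide power2_abs)
  have a1: "tri_area A B C = \<bar>D\<bar>/2"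
    unfolding tri_area_eq D_def by (simp add: abs_minus_commute algebra_simps)
  have a2: "tri_area A' B' C' = \<bar>(B'$1-A'$1)*(C'$2-A'$2)-(B'$2-A'$2)*(C'$1-A'$1)\<bar>/2"
    unfolding tri_area_eq by (simp add: abs_minus_commute algebra_simps)
  define E where "E = (B'$1-A'$1)*(C'$2-A'$2)-(B'$2-A'$2)*(C'$1-A'$1)"
  have KE: "E = S^2/(4*D)" using K D0 unfolding E_def by (simp add: field_simps)
  have "tri_area A' B' C' / tri_area A B C = \<bar>E\<bar> / \<bar>D\<bar>"
    unfolding a1 a2 E_def using D0 by simp
  also have "\<dots> = S^2/(4*D^2)" unfolding KE using D0
    by (simp add: abs_mult power2_eq_square)
  finally show ?thesis using rhs by simp
qed

end
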